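(* In the $T$-period model described in the context, with short sales prohibitions (admissible strategies are predictable self-financing with $h_m(t)\ge 0$ for $m\ge 1$), if there is no multi-period arbitrage under model uncertainty, then there exists a weak risk neutral nonlinear expectation: a nonempty family $\mathcal{Q}$ of probability measures on $\Omega$ with $\sup_{Q\in\mathcal{Q}}Q(\omega)>0$ for all $\omega\in\Omega$ such that for all $0\le t\le u\le T$, all $m=1,\dots,M$ and all $\omega\in\Omega$, $$\inf_{Q\in\mathcal{Q},\,Q(\omega)>0}E_Q[S_m^*(u)\mid\mathcal{F}_t](\omega)\le S_m^*(t)(\omega).$$
   Context: Multi-period model: $\Omega=\{\omega_1,\dots,\omega_K\}$ is finite with a filtration $\mathcal{F}_0\subseteq\cdots\subseteq\mathcal{F}_T$, $\mathcal{F}_0$ trivial and $\mathcal{F}_T=2^\Omega$. $\mathcal{P}$ is a nonempty family of probability measures on $\Omega$ with $\sup_{P\in\mathcal{P}}P(\omega)>0$ for all $\omega$. Bond: $S_0(0)=1$, $S_0(t)=(1+r_1)\cdots(1+r_t)$, each $r_t\ge 0$ $\mathcal{F}_{t-1}$-measurable. Risky securities $S_m(t)$ are $\mathcal{F}_t$-measurable with $S_m(0)>0$. Discounted prices $S_m^*(t)=S_m(t)/S_0(t)$, $\Delta S_m^*(t)=S_m^*(t)-S_m^*(t-1)$. A trading strategy $H=(h(t))_{t=1}^T$, $h(t)=(h_0(t),\dots,h_M(t))$ $\mathcal{F}_{t-1}$-measurable; $V^*(0)=h_0(1)+\sum_m h_m(1)S_m^*(0)$, $V^*(t)=h_0(t)+\sum_m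 h_m(t)S_m^*(t)$. $H$ is self-financing if $[h_0(t+1)-h_0(t)]+\sum_m[h_m(t+1)-h_m(t)]S_m^*(t)=0$ for $t=1,\dots,T-1$. An admissible self-financing $H$ is a multi-period arbitrage under model uncertainty if $V^*(0)=0$, $V^*(T)\ge 0$ on $\Omega$, and $\sup_{P\in\mathcal{P}}E_P[V^*(T)]>0$. For $Q$ with $Q(\omega)>0$, $E_Q[X\mid\mathcal{F}_t](\omega)$ is the $Q$-average of $X$ over the $\mathcal{F}_t$-atom containing $\omega$. *)

theory Defs
  imports "HOL-Analysis.Analysis"
begin

text \<open>Finite sample space = the finite type 'w (Omega = UNIV).
  Probability measures on Omega are represented by their mass functions.\<close>

definition prob_fun :: "('w::finite \<Rightarrow> real) \<Rightarrow> bool" where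
  "prob_fun Q \<longleftrightarrow> (\<forall>w. 0 \<le> Q w) \<and> (\<Sum>w\<in>UNIV. Q w) = 1"

definition expect :: "('w::finite \<Rightarrow> real) \<Rightarrow> ('w \<Rightarrow> real) \<Rightarrow> real" where
  "expect Q X = (\<Sum>w\<in>UNIV. Q w * X w)"

definition is_filtration :: "nat \<Rightarrow> (nat \<Rightarrow> 'w::finite set set) \<Rightarrow> bool" where
  "is_filtration T F \<longleftrightarrow>
     (\<forall>t\<le>T. algebra UNIV (F t)) \<and>
     (\<forall>s t. s \<le> t \<longrightarrow> t \<le> T \<longrightarrow> F s \<subseteq> F t) \<and>
     F 0 = {{}, UNIV} \<and> F T = Pow UNIV"

definition meas_wrt :: "'w set set \<Rightarrow> ('w \<Rightarrow> real) \<Rightarrow> bool" where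
  "meas_wrt A f \<longleftrightarrow> (\<forall>y. f -` {y} \<in> A)"

definition atom :: "(nat \<Rightarrow> 'w set set) \<Rightarrow> nat \<Rightarrow> 'w \<Rightarrow> 'w set" where
  "atom F t w = \<Inter>{A \<in> F t. w \<in> A}"

definition cond_exp :: "(nat \<Rightarrow> 'w::finite set set) \<Rightarrow> nat \<Rightarrow> ('w \<Rightarrow> real) \<Rightarrow> ('w \<Rightarrow> real) \<Rightarrow> 'w \<Rightarrow> real" where
  "cond_exp F t Q X w = (\<Sum>x\<in>atom F t w. Q x * X x) / (\<Sum>x\<in>atom F t w. Q x)"

text \<open>Bond S_0(t) = (1+r_1)...(1+r_t), discounted prices S*_m(t) = S_m(t)/S_0(t).
  S m t w is the price of risky asset m at time t.\<close>
definition bond :: "(nat \<Rightarrow> 'w \<Rightarrow> real) \<Rightarrow> nat \<Rightarrow> 'w \<Rightarrow> real" where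
  "bond r t w = (\<Prod>s\<in>{1..t}. 1 + r s w)"

definition disc :: "(nat \<Rightarrow> nat \<Rightarrow> 'w \<Rightarrow> real) \<Rightarrow> (nat \<Rightarrow> 'w \<Rightarrow> real) \<Rightarrow> nat \<Rightarrow> nat \<Rightarrow> 'w \<Rightarrow> real" where
  "disc S r m t w = S m t w / bond r t w"

definition model :: "nat \<Rightarrow> nat \<Rightarrow> (nat \<Rightarrow> 'w::finite set set) \<Rightarrow> (nat \<Rightarrow> 'w \<Rightarrow> real)
    \<Rightarrow> (nat \<Rightarrow> nat \<Rightarrow> 'w \<Rightarrow> real) \<Rightarrow> bool" where
  "model T M F r S \<longleftrightarrow>
     is_filtration T F \<and>
     (\<forall>t\<in>{1..T}. \<forall>w. 0 \<le> r t w) \<and>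
     (\<forall>t\<in>{1..T}. meas_wrt (F (t - 1)) (r t)) \<and>
     (\<forall>m\<in>{1..M}. \<forall>t\<le>T. meas_wrt (F t) (S m t)) \<and>
     (\<forall>m\<in>{1..M}. \<forall>w. 0 < S m 0 w)"

text \<open>Trading strategy h t m w = h_m(t)(w), t = 1..T, m = 0..M (m = 0 is the bond).\<close>
definition value0 :: "(nat \<Rightarrow> nat \<Rightarrow> 'w \<Rightarrow> real) \<Rightarrow> (nat \<Rightarrow> 'w \<Rightarrow> real) \<Rightarrow> nat
    \<Rightarrow> (nat \<Rightarrow> nat \<Rightarrow> 'w \<Rightarrow> real) \<Rightarrow> 'w \<Rightarrow> real" where
  "value0 S r M h w = h 1 0 w + (\<Sum>m=1..M. h 1 m w * disc S r m 0 w)"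

definition valuet :: "(nat \<Rightarrow> nat \<Rightarrow> 'w \<Rightarrow> real) \<Rightarrow> (nat \<Rightarrow> 'w \<Rightarrow> real) \<Rightarrow> nat
    \<Rightarrow> (nat \<Rightarrow> nat \<Rightarrow> 'w \<Rightarrow> real) \<Rightarrow> nat \<Rightarrow> 'w \<Rightarrow> real" where
  "valuet S r M h t w = h t 0 w + (\<Sum>m=1..M. h t m w * disc S r m t w)"

definition admissible :: "nat \<Rightarrow> nat \<Rightarrow> (nat \<Rightarrow> 'w set set) \<Rightarrow> (nat \<Rightarrow> 'w \<Rightarrow> real)
    \<Rightarrow> (nat \<Rightarrow> nat \<Rightarrow> 'w \<Rightarrow> real) \<Rightarrow> (nat \<Rightarrow> nat \<Rightarrow> 'w \<Rightarrow> real) \<Rightarrow> bool" where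
  "admissible T M F r S h \<longleftrightarrow>
     (\<forall>t\<in>{1..T}. \<forall>m\<le>M. meas_wrt (F (t - 1)) (h t m)) \<and>
     (\<forall>t\<in>{1..T - 1}. \<forall>w. (h (t + 1) 0 w - h t 0 w)
        + (\<Sum>m=1..M. (h (t + 1) m w - h t m w) * disc S r m t w) = 0) \<and>
     (\<forall>t\<in>{1..T}. \<forall>m\<in>{1..M}. \<forall>w. 0 \<le> h t m w)"

definition arbitrage :: "('w::finite \<Rightarrow> real) set \<Rightarrow> nat \<Rightarrow> nat \<Rightarrow> (nat \<Rightarrow> 'w set set)
    \<Rightarrow> (nat \<Rightarrow> 'w \<Rightarrow> real) \<Rightarrow> (nat \<Rightarrow> nat \<Rightarrow> 'w \<Rightarrow> real) \<Rightarrow> (nat \<Rightarrow> nat \<Rightarrow> 'w \<Rightarrow> real) \<Rightarrow> bool" where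
  "arbitrage \<P> T M F r S h \<longleftrightarrow>
     admissible T M F r S h \<and>
     (\<forall>w. value0 S r M h w = 0) \<and>
     (\<forall>w. 0 \<le> valuet S r M h T w) \<and>
     (SUP P\<in>\<P>. expect P (valuet S r M h T)) > 0"

definition prob_family :: "('w::finite \<Rightarrow> real) set \<Rightarrow> bool" where
  "prob_family \<Q> \<longleftrightarrow> \<Q> \<noteq> {} \<and> (\<forall>Q\<in>\<Q>. prob_fun Q) \<and> (\<forall>w. (SUP Q\<in>\<Q>. Q w) > 0)"

end

theory Submission
  imports Defs
begin

definition indist :: "'w set set \<Rightarrow> 'w \<Rightarrow> 'w \<Rightarrow> bool" where
  "indist A x y \<longleftrightarrow> (\<forall>B\<in>A. x \<in> B \<longrightarrow> y \<in> B)"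

lemma atom_mem: "y \<in> atom F t w \<longleftrightarrow> indist (F t) w y"
  by (auto simp: atom_def indist_def)

lemma indist_sym:
  assumes "algebra UNIV A" "indist A x y" shows "indist A y x"
  unfolding indist_def
proof (intro ballI impI)
  fix B assume B: "B \<in> A" "y \<in> B"
  show "x \<in> B"
  proof (rule ccontr)
    assume nx: "x \<notin> B"
    have "UNIV - B \<in> A" using algebra.compl_sets[OF assms(1) B(1)] .
    moreover have "x \<in> UNIV - B" using nx by simp
    moreover have "\<forall>C\<in>A. x \<in> C \<longrightarrow> y \<in> C" using assms(2) unfolding indist_def .
    ultimately have "y \<in> UNIV - B" by blast
    then show False using B(2) by simp
  qed
qed

lemma indist_trans: "indist A x y \<Longrightarrow> indist A y z \<Longrightarrow> indist A x z"
  by (auto simp: indist_def)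

lemma indist_mono: "A \<subseteq> A' \<Longrightarrow> indist A' x y \<Longrightarrow> indist A x y"
  by (auto simp: indist_def)

lemma meas_eq:
  assumes mw: "meas_wrt A f" and i: "indist A x y" shows "f x = f y"
proof -
  have "f -` {f x} \<in> A" using mw unfolding meas_wrt_def by blast
  moreover have "x \<in> f -` {f x}" by simp
  ultimately have "y \<in> f -` {f x}" using i unfolding indist_def by blast
  then show "f x = f y" by simp
qed

lemma meas_char:
  fixes A :: "'w::finite set set"
  assumes alg: "algebra UNIV A"
  shows "meas_wrt A f \<longleftrightarrow> (\<forall>x y. indist A x y \<longrightarrow> f x = f y)"
proof
  assume mw: "meas_wrt A f"
  show "\<forall>x y. indist A x y \<longrightarrow> f x = f y"
  proof (intro allI impI)
    fix x y assume i: "indist A x y"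
    have "f -` {f x} \<in> A" using mw unfolding meas_wrt_def by blast
    moreover have "x \<in> f -` {f x}" by simp
    ultimately have "y \<in> f -` {f x}" using i unfolding indist_def by blast
    then show "f x = f y" by simp
  qed
next
  assume H: "\<forall>x y. indist A x y \<longrightarrow> f x = f y"
  interpret algebra UNIV A by (rule alg)
  have finA: "finite A"
    by simp
  have at: "\<Inter>{B\<in>A. x \<in> B} \<in> A" for x
  proof -
    have "(\<Inter>B\<in>{B\<in>A. x \<in> B}. B) \<in> A"
      apply (rule finite_INT)
      using finA top by auto
    then show ?thesis by simp
  qed
  show "meas_wrt A f"
    unfolding meas_wrt_def
  proof
    fix c
    have "f -` {c} = (\<Union>x\<in>f -` {c}. \<Inter>{B\<in>A. x \<in> B})"
    proof
      show "f -` {c} \<subseteq> (\<Union>x\<in>f -` {c}. \<Inter>{B\<in>A. x \<in> B})" by blast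
      show "(\<Union>x\<in>f -` {c}. \<Inter>{B\<in>A. x \<in> B}) \<subseteq> f -` {c}"
      proof
        fix z assume "z \<in> (\<Union>x\<in>f -` {c}. \<Inter>{B\<in>A. x \<in> B})"
        then obtain x where x: "f x = c" "\<forall>B\<in>A. x \<in> B \<longrightarrow> z \<in> B" by auto
        then have "f x = f z" using H unfolding indist_def by blast
        then show "z \<in> f -` {c}" using x by simp
      qed
    qed
    also have "\<dots> \<in> A"
      apply (rule finite_UN) using at by auto
    finally show "f -` {c} \<in> A" .
  qed
qed

lemma eps_lemma:
  fixes I a d :: real
  assumes "\<And>e. 0 < e \<Longrightarrow> e < 1 \<Longrightarrow> I \<le> a + e * d"
  shows "I \<le> a"
proof (rule ccontr)
  assume "\<not> I \<le> a"
  then have p: "I - a > 0" by simp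
  define e where "e = min (1/2) ((I - a) / (2 * (\<bar>d\<bar> + 1)))"
  have e0: "0 < e" "e < 1" using p by (auto simp: e_def)
  have "e * d \<le> e * \<bar>d\<bar>" using e0 by (simp add: mult_left_mono)
  also have "\<dots> \<le> (I - a) / (2 * (\<bar>d\<bar> + 1)) * (\<bar>d\<bar> + 1)"
    using e0 by (intro mult_mono) (auto simp: e_def)
  also have "\<dots> = (I - a) / 2" by (simp add: field_simps)
  finally have "e * d < I - a" using p by simp
  with assms[OF e0] show False by simp
qed

lemma indist_refl: "indist A x x" by (simp add: indist_def)

lemma disc_meas:
  fixes F :: "nat \<Rightarrow> 'w::finite set set"
  assumes mod: "model T M F r S" and u: "u \<le> T" and m: "m \<in> {1..M}"
    and ind: "indist (F u) x y"
  shows "disc S r m u x = disc S r m u y"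
proof -
  have filt: "is_filtration T F" using mod by (simp add: model_def)
  have alg: "algebra UNIV (F u)" using filt u by (simp add: is_filtration_def)
  have "meas_wrt (F u) (S m u)" using mod u m by (simp add: model_def)
  then have eS: "S m u x = S m u y" using ind by (rule meas_eq)
  have "r s x = r s y" if s: "s \<in> {1..u}" for s
  proof -
    have s1: "s - 1 \<le> u" "u \<le> T" "s - 1 \<le> T" using u s by auto
    have algs: "algebra UNIV (F (s - 1))" using filt s1(3) by (simp add: is_filtration_def)
    have "meas_wrt (F (s - 1)) (r s)" using mod u s by (simp add: model_def)
    moreover have "F (s - 1) \<subseteq> F u" using filt s1(1,2) by (simp add: is_filtration_def)
    then have "indist (F (s - 1)) x y" using ind by (rule indist_mono)
    ultimately show ?thesis by (rule meas_eq)
  qed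
  then have "bond r u x = bond r u y" unfolding bond_def by (intro prod.cong) auto
  then show ?thesis using eS by (simp add: disc_def)
qed

lemma prob_le1:
  fixes P :: "'w::finite \<Rightarrow> real"
  assumes "prob_fun P" shows "P y \<le> 1"
proof -
  have "P y \<le> (\<Sum>z\<in>UNIV. P z)" using assms unfolding prob_fun_def
    by (intro member_le_sum) auto
  then show ?thesis using assms unfolding prob_fun_def by simp
qed

lemma sum_delta_mult:
  fixes d :: "nat \<Rightarrow> real"
  assumes "m \<in> {1..M}"
  shows "(\<Sum>j=1..M. (if j = 0 then a else if j = m then b else 0) * d j) = b * d m"
proof -
  have "(\<Sum>j=1..M. (if j = 0 then a else if j = m then b else 0) * d j)
      = (\<Sum>j\<in>{1..M}. if j = m then b * d j else 0)"
    by (intro sum.cong) auto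
  also have "\<dots> = b * d m" using assms by (simp add: sum.delta)
  finally show ?thesis .
qed

lemma key_lemma:
  fixes F :: "nat \<Rightarrow> 'w::finite set set"
  assumes mod: "model T M F r S" and pf: "prob_family \<P>"
    and noarb: "\<not> (\<exists>h. arbitrage \<P> T M F r S h)"
    and tu: "t \<le> u" and uT: "u \<le> T" and m: "m \<in> {1..M}"
  shows "\<exists>x. indist (F t) w x \<and> disc S r m u x \<le> disc S r m t w"
proof (rule ccontr)
  assume "\<not> ?thesis"
  then have H: "\<And>x. indist (F t) w x \<Longrightarrow> disc S r m t w < disc S r m u x" by force
  define X where "X = disc S r m u"
  define c where "c = disc S r m t w"
  have filt: "is_filtration T F" using mod by (simp add: model_def)
  have alg: "\<And>s. s \<le> T \<Longrightarrow> algebra UNIV (F s)" using filt by (simp add: is_filtration_def)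
  have monoF: "\<And>s s'. s \<le> s' \<Longrightarrow> s' \<le> T \<Longrightarrow> F s \<subseteq> F s'" using filt by (simp add: is_filtration_def)
  have tu': "t < u"
  proof (rule ccontr)
    assume "\<not> t < u" then have "t = u" using tu by simp
    then show False using H[OF indist_refl] by simp
  qed
  have tT: "t \<le> T" using tu uT by simp
  have cA: "\<And>x. indist (F t) w x \<Longrightarrow> disc S r m t x = c"
  proof -
    fix x assume "indist (F t) w x"
    then show "disc S r m t x = c" unfolding c_def using disc_meas[OF mod tT m, of w x] by simp
  qed
  have HX: "\<And>x. indist (F t) w x \<Longrightarrow> c < X x" unfolding X_def c_def by (rule H)
  define h where "h = (\<lambda>s j x. if indist (F t) w x \<and> t < s then
      (if s \<le> u then (if j = 0 then - c else if j = m then 1 else 0)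
       else (if j = (0::nat) then X x - c else 0)) else (0::real))"
  define V2 where "V2 = (\<lambda>a b x. h a 0 x + (\<Sum>j=1..M. h a j x * disc S r j b x))"
  have V2f: "V2 a b x = (if indist (F t) w x \<and> t < a then
       (if a \<le> u then - c + disc S r m b x else X x - c) else 0)" for a b x
  proof (cases "indist (F t) w x \<and> t < a")
    case True
    show ?thesis
    proof (cases "a \<le> u")
      case True2: True
      have "V2 a b x = - c + (\<Sum>j=1..M. (if j = 0 then - c else if j = m then 1 else 0) * disc S r j b x)"
        unfolding V2_def h_def using True True2 by simp
      also have "\<dots> = - c + disc S r m b x" using sum_delta_mult[OF m] by simp
      finally show ?thesis using True True2 by simp
    next
      case False
      have "V2 a b x = X x - c + (\<Sum>j=1..M. (if j = 0 then X x - c else if j = m then 0 else 0) * disc S r j b x)"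
        unfolding V2_def h_def using True False by simp
      also have "\<dots> = X x - c" using sum_delta_mult[OF m, of "X x - c" 0] by simp
      finally show ?thesis using True False by simp
    qed
  next
    case False
    then have "\<And>j. h a j x = 0" unfolding h_def by auto
    then show ?thesis using False unfolding V2_def by auto
  qed
  have indA: "indist (F t) w x \<longleftrightarrow> indist (F t) w y" if "indist (F t) x y" for x y
  proof
    show "indist (F t) w x \<Longrightarrow> indist (F t) w y" by (rule indist_trans[OF _ that])
    have "indist (F t) y x" using indist_sym[OF alg[OF tT] that] .
    then show "indist (F t) w y \<Longrightarrow> indist (F t) w x" by (rule indist_trans[rotated])
  qed
  have adm: "admissible T M F r S h"
    unfolding admissible_def
  proof (intro conjI ballI allI impI)
    fix s j assume s: "s \<in> {1..T}" and j: "j \<le> M"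
    have "s - 1 \<le> T" using s by auto
    then have algs: "algebra UNIV (F (s - 1))" by (rule alg)
    show "meas_wrt (F (s - 1)) (h s j)"
      unfolding meas_char[OF algs]
    proof (intro allI impI)
      fix x y assume ixy: "indist (F (s - 1)) x y"
      show "h s j x = h s j y"
      proof (cases "t < s")
        case True
        have "F t \<subseteq> F (s - 1)" using monoF[of t "s - 1"] s True by simp
        then have "indist (F t) x y" using ixy by (rule indist_mono)
        then have eA: "indist (F t) w x \<longleftrightarrow> indist (F t) w y" by (rule indA)
        show ?thesis
        proof (cases "s \<le> u")
          case True
          then show ?thesis using eA unfolding h_def by simp
        next
          case False
          then have "F u \<subseteq> F (s - 1)" using monoF[of u "s - 1"] s by simp
          then have "indist (F u) x y" using ixy by (rule indist_mono)
          then have "X x = X y" unfolding X_def by (rule disc_meas[OF mod uT m])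
          then show ?thesis using eA unfolding h_def by simp
        qed
      next
        case False
        then show ?thesis unfolding h_def by simp
      qed
    qed
  next
    fix s x assume s: "s \<in> {1..T - 1}"
    have "(h (s + 1) 0 x - h s 0 x) + (\<Sum>j=1..M. (h (s + 1) j x - h s j x) * disc S r j s x)
        = V2 (s + 1) s x - V2 s s x"
      unfolding V2_def by (simp add: left_diff_distrib sum_subtractf)
    also have "\<dots> = 0"
    proof (cases "indist (F t) w x")
      case True
      have "s = t \<or> s = u \<or> s < t \<or> (t < s \<and> s < u) \<or> u < s" by linarith
      then show ?thesis
        using True cA[OF True] tu' unfolding V2f X_def by auto
    next
      case False
      then show ?thesis unfolding V2f by simp
    qed
    finally show "(h (s + 1) 0 x - h s 0 x) + (\<Sum>j=1..M. (h (s + 1) j x - h s j x) * disc S r j s x) = 0" .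
  next
    fix s j x assume "s \<in> {1..T}" "j \<in> {1..M}"
    then show "0 \<le> h s j x" unfolding h_def by auto
  qed
  have v0: "value0 S r M h x = 0" for x
  proof -
    have "value0 S r M h x = V2 1 0 x" unfolding value0_def V2_def by simp
    also have "\<dots> = 0"
    proof (cases "indist (F t) w x \<and> t < 1")
      case True
      then have "t = 0" by simp
      then show ?thesis using True cA[of x] tu' unfolding V2f by simp
    next
      case False then show ?thesis by (subst V2f) (simp only: if_not_P[OF False] if_False)
    qed
    finally show ?thesis .
  qed
  have vT: "valuet S r M h T x = (if indist (F t) w x then X x - c else 0)" for x
  proof -
    have "valuet S r M h T x = V2 T T x" unfolding valuet_def V2_def by simp
    also have "\<dots> = (if indist (F t) w x then X x - c else 0)"
      using tu' uT unfolding V2f X_def by auto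
    finally show ?thesis .
  qed
  have vTnn: "0 \<le> valuet S r M h T x" for x
    unfolding vT using HX by (auto simp: less_imp_le)
  have vTw: "0 < valuet S r M h T w" unfolding vT using HX[OF indist_refl] by (simp add: indist_refl)
  obtain P where P: "P \<in> \<P>" "0 < P w"
  proof -
    have ne: "\<P> \<noteq> {}" and sp: "(SUP Q\<in>\<P>. Q w) > 0" using pf by (auto simp: prob_family_def)
    show ?thesis
    proof (rule ccontr)
      assume "\<not> thesis"
      then have "\<forall>Q\<in>\<P>. Q w \<le> 0" using that by force
      then have "(SUP Q\<in>\<P>. Q w) \<le> 0" using ne by (intro cSUP_least) auto
      then show False using sp by simp
    qed
  qed
  have probP: "\<And>Q. Q \<in> \<P> \<Longrightarrow> prob_fun Q" using pf by (simp add: prob_family_def)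
  define V where "V = valuet S r M h T"
  have Vnn: "0 \<le> P y * V y" for y
  proof -
    have "0 \<le> P y" using probP[OF P(1)] unfolding prob_fun_def by blast
    moreover have "0 \<le> V y" unfolding V_def by (rule vTnn)
    ultimately show ?thesis by simp
  qed
  have "P w * V w \<le> expect P V"
    unfolding expect_def by (rule member_le_sum) (use Vnn in auto)
  moreover have "0 < P w * V w" using P(2) vTw unfolding V_def by simp
  moreover have "expect P V \<le> (SUP Q\<in>\<P>. expect Q V)"
  proof (rule cSUP_upper[OF P(1)])
    show "bdd_above ((\<lambda>Q. expect Q V) ` \<P>)"
    proof (rule bdd_aboveI2)
      fix Q assume Q: "Q \<in> \<P>"
      show "expect Q V \<le> (\<Sum>y\<in>UNIV. V y)"
        unfolding expect_def
      proof (rule sum_mono)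
        fix y
        show "Q y * V y \<le> V y"
        proof (rule mult_left_le_one_le)
          show "0 \<le> V y" unfolding V_def by (rule vTnn)
          show "0 \<le> Q y" using probP[OF Q] unfolding prob_fun_def by blast
          show "Q y \<le> 1" using prob_le1[OF probP[OF Q]] .
        qed
      qed
    qed
  qed
  ultimately have "(SUP Q\<in>\<P>. expect Q V) > 0" by linarith
  then have pos: "(SUP Q\<in>\<P>. expect Q (valuet S r M h T)) > 0" unfolding V_def .
  have "arbitrage \<P> T M F r S h"
    unfolding arbitrage_def using adm v0 vTnn pos by (intro conjI allI) simp_all
  then show False using noarb by blast
qed

lemma cond_exp_lower:
  fixes Q X :: "'w::finite \<Rightarrow> real"
  assumes pQ: "prob_fun Q" and Qw: "0 < Q w"
  shows "- (\<Sum>y\<in>UNIV. \<bar>X y\<bar>) \<le> cond_exp F t Q X w"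
proof -
  define B where "B = (\<Sum>y\<in>UNIV. \<bar>X y\<bar>)"
  define A where "A = atom F t w"
  have wA: "w \<in> A" unfolding A_def atom_mem by (rule indist_refl)
  have Qnn: "\<And>y. 0 \<le> Q y" using pQ by (simp add: prob_fun_def)
  have XB: "- B \<le> X y" for y
  proof -
    have "\<bar>X y\<bar> \<le> B" unfolding B_def by (rule member_le_sum) auto
    then show ?thesis by simp
  qed
  have D: "0 < (\<Sum>x\<in>A. Q x)"
  proof -
    have "Q w \<le> (\<Sum>x\<in>A. Q x)" using wA Qnn by (intro member_le_sum) auto
    then show ?thesis using Qw by simp
  qed
  have "(\<Sum>x\<in>A. Q x * (- B)) \<le> (\<Sum>x\<in>A. Q x * X x)"
    using Qnn XB by (intro sum_mono mult_left_mono) auto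
  moreover have "(\<Sum>x\<in>A. Q x * (- B)) = - B * (\<Sum>x\<in>A. Q x)"
    by (simp add: sum_distrib_left sum_negf mult.commute)
  ultimately have "- B * (\<Sum>x\<in>A. Q x) \<le> (\<Sum>x\<in>A. Q x * X x)" by simp
  then have "- B \<le> (\<Sum>x\<in>A. Q x * X x) / (\<Sum>x\<in>A. Q x)"
    using D by (simp add: pos_le_divide_eq)
  then show ?thesis unfolding cond_exp_def A_def B_def .
qed

theorem mainTheorem7:
  fixes T M :: nat
    and F :: "nat \<Rightarrow> 'w::finite set set"
    and r :: "nat \<Rightarrow> 'w \<Rightarrow> real"
    and S :: "nat \<Rightarrow> nat \<Rightarrow> 'w \<Rightarrow> real"
    and \<P> :: "('w \<Rightarrow> real) set"
  assumes "model T M F r S"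
    and "prob_family \<P>"
    and "\<not> (\<exists>h. arbitrage \<P> T M F r S h)"
  shows "\<exists>\<Q>. prob_family \<Q> \<and>
    (\<forall>t u m w. t \<le> u \<longrightarrow> u \<le> T \<longrightarrow> m \<in> {1..M} \<longrightarrow>
       (INF Q\<in>{Q\<in>\<Q>. Q w > 0}. cond_exp F t Q (disc S r m u) w) \<le> disc S r m t w)"
proof -
  define \<Q> :: "('w \<Rightarrow> real) set" where "\<Q> = {Q. prob_fun Q}"
  define \<delta> :: "'w \<Rightarrow> 'w \<Rightarrow> real" where "\<delta> = (\<lambda>a y. if y = a then 1 else 0)"
  have pd: "prob_fun (\<delta> a)" for a unfolding prob_fun_def \<delta>_def by simp
  have le1: "Q w \<le> 1" if "Q \<in> \<Q>" for Q w using that unfolding \<Q>_def using prob_le1 by blast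
  have pf: "prob_family \<Q>"
    unfolding prob_family_def
  proof (intro conjI allI ballI)
    show "\<Q> \<noteq> {}" using pd unfolding \<Q>_def by blast
    show "\<And>Q. Q \<in> \<Q> \<Longrightarrow> prob_fun Q" unfolding \<Q>_def by simp
    fix w
    have "\<delta> w w \<le> (SUP Q\<in>\<Q>. Q w)"
    proof (rule cSUP_upper[of "\<delta> w" \<Q> "\<lambda>Q. Q w"])
      show "\<delta> w \<in> \<Q>" using pd unfolding \<Q>_def by simp
      show "bdd_above ((\<lambda>Q. Q w) ` \<Q>)" using le1 by (intro bdd_aboveI2) auto
    qed
    then show "0 < (SUP Q\<in>\<Q>. Q w)" unfolding \<delta>_def by simp
  qed
  have main: "(INF Q\<in>{Q\<in>\<Q>. Q w > 0}. cond_exp F t Q (disc S r m u) w) \<le> disc S r m t w"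
    if tu: "t \<le> u" and uT: "u \<le> T" and m: "m \<in> {1..M}" for t u m w
  proof -
    obtain x where x: "indist (F t) w x" "disc S r m u x \<le> disc S r m t w"
      using key_lemma[OF assms tu uT m] by blast
    define X where "X = disc S r m u"
    define A where "A = atom F t w"
    have xA: "x \<in> A" unfolding A_def atom_mem by (rule x(1))
    have wA: "w \<in> A" unfolding A_def atom_mem by (rule indist_refl)
    have bdd: "bdd_below ((\<lambda>Q. cond_exp F t Q X w) ` {Q\<in>\<Q>. Q w > 0})"
      by (rule bdd_belowI2[of _ "- (\<Sum>y\<in>UNIV. \<bar>X y\<bar>)"])
         (auto simp: \<Q>_def intro: cond_exp_lower)
    have step: "(INF Q\<in>{Q\<in>\<Q>. Q w > 0}. cond_exp F t Q X w) \<le> X x + e * (X w - X x)"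
      if e: "0 < e" "e < 1" for e
    proof -
      define Q where "Q = (\<lambda>y. (1 - e) * \<delta> x y + e * \<delta> w y)"
      have sd: "(\<Sum>y\<in>A. \<delta> a y * f y) = f a" if "a \<in> A" for a and f :: "'w \<Rightarrow> real"
      proof -
        have "(\<Sum>y\<in>A. \<delta> a y * f y) = (\<Sum>y\<in>A. if y = a then f y else 0)"
          by (intro sum.cong) (auto simp: \<delta>_def)
        then show ?thesis using that by (simp add: sum.delta)
      qed
      have sd1: "(\<Sum>y\<in>A. \<delta> a y) = 1" if "a \<in> A" for a
        using sd[OF that, of "\<lambda>_. 1"] by simp
      have num: "(\<Sum>y\<in>A. Q y * X y) = (1 - e) * X x + e * X w"
      proof -
        have "(\<Sum>y\<in>A. Q y * X y) = (\<Sum>y\<in>A. (1 - e) * (\<delta> x y * X y) + e * (\<delta> w y * X y))"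
          unfolding Q_def by (intro sum.cong) (auto simp: algebra_simps)
        also have "\<dots> = (1 - e) * (\<Sum>y\<in>A. \<delta> x y * X y) + e * (\<Sum>y\<in>A. \<delta> w y * X y)"
          by (simp add: sum.distrib sum_distrib_left)
        finally have "(\<Sum>y\<in>A. Q y * X y) = (1 - e) * (\<Sum>y\<in>A. \<delta> x y * X y) + e * (\<Sum>y\<in>A. \<delta> w y * X y)" .
        then show ?thesis using sd[OF xA] sd[OF wA] by simp
      qed
      have den: "(\<Sum>y\<in>A. Q y) = 1"
      proof -
        have "(\<Sum>y\<in>A. Q y) = (1 - e) * (\<Sum>y\<in>A. \<delta> x y) + e * (\<Sum>y\<in>A. \<delta> w y)"
          unfolding Q_def by (simp add: sum.distrib sum_distrib_left)
        then show ?thesis using sd1[OF xA] sd1[OF wA] by simp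
      qed
      have ce: "cond_exp F t Q X w = X x + e * (X w - X x)"
        unfolding cond_exp_def A_def[symmetric] num den by (simp add: algebra_simps)
      have pQ: "prob_fun Q"
      proof -
        have "(\<Sum>y\<in>UNIV. Q y) = (1 - e) * (\<Sum>y\<in>UNIV. \<delta> x y) + e * (\<Sum>y\<in>UNIV. \<delta> w y)"
          unfolding Q_def by (simp add: sum.distrib sum_distrib_left)
        also have "\<dots> = 1" by (simp add: \<delta>_def)
        finally show ?thesis unfolding prob_fun_def Q_def \<delta>_def using e by auto
      qed
      have Qw: "0 < Q w" unfolding Q_def \<delta>_def using e by auto
      have "(INF Q\<in>{Q\<in>\<Q>. Q w > 0}. cond_exp F t Q X w) \<le> cond_exp F t Q X w"
        by (rule cINF_lower[OF bdd]) (use pQ Qw in \<open>simp add: \<Q>_def\<close>)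
      then show ?thesis using ce by simp
    qed
    have "(INF Q\<in>{Q\<in>\<Q>. Q w > 0}. cond_exp F t Q X w) \<le> X x"
      by (rule eps_lemma[OF step])
    then show ?thesis using x(2) unfolding X_def by simp
  qed
  show ?thesis using pf main by blast
qed

end
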